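(* Let $n,g,k$ be integers with $k\ge 1$ and $2\leq g\leq \left\lfloor \frac{n-k-2}{2}\right\rfloor$, with $(n-k)g$ even. Let $F_1,F_2$ be two connected $g$-regular graphs with $|V(F_1)|+|V(F_2)|=n-k$, and let $K_{1,k-1}$ be a star with center $v$. Let $F^k_n$ be a graph obtained from the disjoint union of $F_1$, $F_2$ and $K_{1,k-1}$ by adding exactly one edge from $v$ to $F_1$ and exactly one edge from $v$ to $F_2$. Then $\kappa^g(F^k_n)=k$.
   Context: For a connected graph $G=(V,E)$ and integer $g\ge0$: a set $F\subseteq V$ is a $g$-good-neighbor faulty set if $|N(v)\cap (V-F)|\geq g$ for every $v\in V-F$; a $g$-good-neighbor cut is such an $F$ with $G-F$ disconnected; $\kappa^g(G)$ is the minimum cardinality of a $g$-good-neighbor cut. *)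

theory Defs
  imports Main "HOL-Library.Extended_Nat"
begin

definition simple_graph :: "'a set \<Rightarrow> ('a \<Rightarrow> 'a \<Rightarrow> bool) \<Rightarrow> bool" where
  "simple_graph V E \<longleftrightarrow> finite V \<and> (\<forall>x y. E x y \<longrightarrow> x \<in> V \<and> y \<in> V)
     \<and> (\<forall>x y. E x y \<longrightarrow> E y x) \<and> (\<forall>x. \<not> E x x)"

definition nbhd :: "'a set \<Rightarrow> ('a \<Rightarrow> 'a \<Rightarrow> bool) \<Rightarrow> 'a \<Rightarrow> 'a set" where
  "nbhd V E v = {u \<in> V. E v u}"

definition regular :: "'a set \<Rightarrow> ('a \<Rightarrow> 'a \<Rightarrow> bool) \<Rightarrow> nat \<Rightarrow> bool" where
  "regular V E g \<longleftrightarrow> (\<forall>v\<in>V. card (nbhd V E v) = g)"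

definition reach_in :: "'a set \<Rightarrow> ('a \<Rightarrow> 'a \<Rightarrow> bool) \<Rightarrow> 'a \<Rightarrow> 'a \<Rightarrow> bool" where
  "reach_in S E x y = (\<lambda>a b. E a b \<and> a \<in> S \<and> b \<in> S)\<^sup>*\<^sup>* x y"

definition connected_graph :: "'a set \<Rightarrow> ('a \<Rightarrow> 'a \<Rightarrow> bool) \<Rightarrow> bool" where
  "connected_graph V E \<longleftrightarrow> V \<noteq> {} \<and> (\<forall>x\<in>V. \<forall>y\<in>V. reach_in V E x y)"

definition disconnected_after :: "'a set \<Rightarrow> ('a \<Rightarrow> 'a \<Rightarrow> bool) \<Rightarrow> 'a set \<Rightarrow> bool" where
  "disconnected_after V E F \<longleftrightarrow> (\<exists>x\<in>V - F. \<exists>y\<in>V - F. \<not> reach_in (V - F) E x y)"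

definition good_neighbor_faulty :: "'a set \<Rightarrow> ('a \<Rightarrow> 'a \<Rightarrow> bool) \<Rightarrow> nat \<Rightarrow> 'a set \<Rightarrow> bool" where
  "good_neighbor_faulty V E g F \<longleftrightarrow> F \<subseteq> V \<and>
     (\<forall>v\<in>V - F. card (nbhd V E v \<inter> (V - F)) \<ge> g)"

definition good_neighbor_cut :: "'a set \<Rightarrow> ('a \<Rightarrow> 'a \<Rightarrow> bool) \<Rightarrow> nat \<Rightarrow> 'a set \<Rightarrow> bool" where
  "good_neighbor_cut V E g F \<longleftrightarrow> good_neighbor_faulty V E g F \<and> disconnected_after V E F"

text \<open>Minimum cardinality of a g-good-neighbor cut (infinity if none exists).\<close>
definition kappa_g :: "'a set \<Rightarrow> ('a \<Rightarrow> 'a \<Rightarrow> bool) \<Rightarrow> nat \<Rightarrow> enat" where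
  "kappa_g V E g = (INF F \<in> {F. good_neighbor_cut V E g F}. enat (card F))"

end

theory Submission
  imports Defs
begin

lemma reach_mono:
  assumes "reach_in S E x y" "S \<subseteq> T" "\<And>p q. E p q \<Longrightarrow> p \<in> S \<Longrightarrow> q \<in> S \<Longrightarrow> E' p q"
  shows "reach_in T E' x y"
  using assms(1) unfolding reach_in_def
proof (induction rule: rtranclp_induct)
  case base then show ?case by simp
next
  case (step y z)
  then show ?case using assms(2,3)
    by (metis (mono_tags, lifting) rtranclp.rtrancl_into_rtrancl subsetD)
qed

lemma reach_sym:
  assumes "reach_in S E x y" "\<And>p q. E p q \<Longrightarrow> E q p"
  shows "reach_in S E y x"
proof -
  have "symp (\<lambda>a b. E a b \<and> a \<in> S \<and> b \<in> S)" using assms(2) by (auto simp: symp_def)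
  then show ?thesis using assms(1) unfolding reach_in_def by (meson symp_rtranclp symp_def)
qed

lemma reach_trans:
  "reach_in S E x y \<Longrightarrow> reach_in S E y z \<Longrightarrow> reach_in S E x z"
  unfolding reach_in_def by simp

lemma reach_edge:
  "E x y \<Longrightarrow> x \<in> S \<Longrightarrow> y \<in> S \<Longrightarrow> reach_in S E x y"
  unfolding reach_in_def by auto

lemma reach_stay:
  assumes "reach_in S E x y" "x \<in> A"
    "\<And>p q. E p q \<Longrightarrow> p \<in> S \<Longrightarrow> q \<in> S \<Longrightarrow> p \<in> A \<Longrightarrow> q \<in> A"
  shows "y \<in> A"
  using assms(1) unfolding reach_in_def
proof (induction rule: rtranclp_induct)
  case base then show ?case using assms(2) by simp
next
  case (step y z) then show ?case using assms(3) by blast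
qed

theorem lemma4p1:
  fixes n g k :: nat
    and V1 V2 L :: "'a set" and E1 E2 :: "'a \<Rightarrow> 'a \<Rightarrow> bool"
    and v a b :: 'a
  assumes "k \<ge> 1"
    and "2 \<le> g" and "int g \<le> (int n - int k - 2) div 2"
    and "even ((int n - int k) * int g)"
    and "simple_graph V1 E1" and "connected_graph V1 E1" and "regular V1 E1 g"
    and "simple_graph V2 E2" and "connected_graph V2 E2" and "regular V2 E2 g"
    and "int (card V1 + card V2) = int n - int k"
    and "V1 \<inter> V2 = {}"
    and "finite L" and "card L = k - 1"
    and "v \<notin> V1" and "v \<notin> V2" and "v \<notin> L"
    and "L \<inter> V1 = {}" and "L \<inter> V2 = {}"
    and "a \<in> V1" and "b \<in> V2"
  shows "kappa_g (V1 \<union> V2 \<union> {v} \<union> L)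
           (\<lambda>x y. E1 x y \<or> E2 x y
                  \<or> (x = v \<and> y \<in> L) \<or> (y = v \<and> x \<in> L)
                  \<or> (x = v \<and> y = a) \<or> (x = a \<and> y = v)
                  \<or> (x = v \<and> y = b) \<or> (x = b \<and> y = v))
           g = enat k"
proof -
  define V where "V = V1 \<union> V2 \<union> {v} \<union> L"
  define E where "E = (\<lambda>x y. E1 x y \<or> E2 x y
                  \<or> (x = v \<and> y \<in> L) \<or> (y = v \<and> x \<in> L)
                  \<or> (x = v \<and> y = a) \<or> (x = a \<and> y = v)
                  \<or> (x = v \<and> y = b) \<or> (x = b \<and> y = v))"
  have s1: "finite V1" "\<And>x y. E1 x y \<Longrightarrow> x \<in> V1 \<and> y \<in> V1" "\<And>x y. E1 x y \<Longrightarrow> E1 y x"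
    using assms(5) unfolding simple_graph_def by auto
  have s2: "finite V2" "\<And>x y. E2 x y \<Longrightarrow> x \<in> V2 \<and> y \<in> V2" "\<And>x y. E2 x y \<Longrightarrow> E2 y x"
    using assms(8) unfolding simple_graph_def by auto
  have finV: "finite V" using s1 s2 assms(13) by (simp add: V_def)
  have Esym: "\<And>x y. E x y \<Longrightarrow> E y x" using s1 s2 unfolding E_def by blast
  define F0 where "F0 = L \<union> {v}"
  have cardF0: "card F0 = k" using assms(1,13,14,17) by (simp add: F0_def)
  have VF0: "V - F0 = V1 \<union> V2" using assms(15-19) by (auto simp: V_def F0_def)
  have cut0: "good_neighbor_cut V E g F0"
    unfolding good_neighbor_cut_def good_neighbor_faulty_def
  proof (intro conjI ballI)
    show "F0 \<subseteq> V" by (auto simp: V_def F0_def)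
  next
    fix x assume x: "x \<in> V - F0"
    show "g \<le> card (nbhd V E x \<inter> (V - F0))"
    proof (cases "x \<in> V1")
      case True
      have "nbhd V1 E1 x \<subseteq> nbhd V E x \<inter> (V - F0)"
        using s1 VF0 by (auto simp: nbhd_def V_def E_def)
      then have "card (nbhd V1 E1 x) \<le> card (nbhd V E x \<inter> (V - F0))"
        by (intro card_mono) (auto simp: finV)
      then show ?thesis using assms(7) True by (simp add: regular_def)
    next
      case False
      then have "x \<in> V2" using x VF0 by auto
      have "nbhd V2 E2 x \<subseteq> nbhd V E x \<inter> (V - F0)"
        using s2 VF0 by (auto simp: nbhd_def V_def E_def)
      then have "card (nbhd V2 E2 x) \<le> card (nbhd V E x \<inter> (V - F0))"
        by (intro card_mono) (auto simp: finV)
      then show ?thesis using assms(10) \<open>x \<in> V2\<close> by (simp add: regular_def)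
    qed
  next
    show "disconnected_after V E F0"
    proof -
      have ab: "a \<in> V - F0" "b \<in> V - F0" using VF0 assms(20,21) by auto
      have "\<not> reach_in (V - F0) E a b"
      proof
        assume r: "reach_in (V - F0) E a b"
        have "b \<in> V1"
        proof (rule reach_stay[OF r assms(20)])
          fix p q assume "E p q" "p \<in> V - F0" "q \<in> V - F0" "p \<in> V1"
          then show "q \<in> V1" using s1 s2 assms(12,15,16,20,21) VF0
            unfolding E_def F0_def by auto
        qed
        then show False using assms(12,21) by auto
      qed
      then show ?thesis using ab unfolding disconnected_after_def by blast
    qed
  qed
  have lower: "k \<le> card F" if F: "good_neighbor_cut V E g F" for F
  proof -
    have FV: "F \<subseteq> V" and good: "\<And>x. x \<in> V - F \<Longrightarrow> g \<le> card (nbhd V E x \<inter> (V - F))"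
      and dis: "disconnected_after V E F"
      using F unfolding good_neighbor_cut_def good_neighbor_faulty_def by auto
    have LF: "L \<subseteq> F"
    proof
      fix l assume l: "l \<in> L"
      show "l \<in> F"
      proof (rule ccontr)
        assume "l \<notin> F"
        then have "g \<le> card (nbhd V E l \<inter> (V - F))" using good l by (auto simp: V_def)
        moreover have sub: "nbhd V E l \<inter> (V - F) \<subseteq> {v}"
          using l s1 s2 assms(15-21) by (auto simp: nbhd_def E_def)
        have "card (nbhd V E l \<inter> (V - F)) \<le> 1"
            using card_mono[OF _ sub] by simp
        ultimately show False using assms(2) by simp
      qed
    qed
    have finF: "finite F" using FV finV finite_subset by blast
    show ?thesis
    proof (rule ccontr)
      assume "\<not> k \<le> card F"
      then have "card F \<le> card L" using assms(14) by simp
      moreover have "card L \<le> card F" using card_mono[OF finF LF] .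
      ultimately have FL: "F = L" using card_subset_eq[OF finF LF] by simp
      have VF: "V - F = V1 \<union> V2 \<union> {v}" using FL assms(15-19) by (auto simp: V_def)
      let ?S = "V1 \<union> V2 \<union> {v}"
      have rv: "reach_in ?S E x v" if "x \<in> ?S" for x
      proof -
        { assume x: "x \<in> V1"
          have "reach_in V1 E1 x a" using assms(6) x assms(20) by (simp add: connected_graph_def)
          then have "reach_in ?S E x a" by (rule reach_mono) (auto simp: E_def)
          moreover have "reach_in ?S E a v" by (rule reach_edge) (auto simp: E_def assms(20))
          ultimately have ?thesis by (rule reach_trans) }
        moreover
        { assume x: "x \<in> V2"
          have "reach_in V2 E2 x b" using assms(9) x assms(21) by (simp add: connected_graph_def)
          then have "reach_in ?S E x b" by (rule reach_mono) (auto simp: E_def)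
          moreover have "reach_in ?S E b v" by (rule reach_edge) (auto simp: E_def assms(21))
          ultimately have ?thesis by (rule reach_trans) }
        moreover
        { assume "x = v" then have ?thesis by (simp add: reach_in_def) }
        ultimately show ?thesis using that by blast
      qed
      have "\<forall>x\<in>?S. \<forall>y\<in>?S. reach_in ?S E x y"
      proof (intro ballI)
        fix x y assume "x \<in> ?S" "y \<in> ?S"
        then have "reach_in ?S E x v" "reach_in ?S E v y"
          using rv reach_sym[OF rv Esym] by auto
        then show "reach_in ?S E x y" by (rule reach_trans)
      qed
      then show False using dis VF unfolding disconnected_after_def by simp
    qed
  qed
  have "kappa_g V E g = enat k"
    unfolding kappa_g_def
  proof (rule antisym)
    show "(INF F \<in> {F. good_neighbor_cut V E g F}. enat (card F)) \<le> enat k"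
      using cut0 cardF0 by (metis INF_lower mem_Collect_eq)
    show "enat k \<le> (INF F \<in> {F. good_neighbor_cut V E g F}. enat (card F))"
      using lower by (auto intro!: INF_greatest)
  qed
  then show ?thesis by (simp add: V_def E_def)
qed

end
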